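(* Let $k$ be a field of characteristic $0$, let $\Lambda_{\mathbf q}$, $G$, $\chi_{g,l}$, $\mathbb K$, $K_{g,\gamma}$ and $C_g$ be as in the context, and let $g\in G$ and $\gamma\in(\mathbb N\cup\{-1\})^n$ with $\gamma\notin C_g$. Then the complex $K_{g,\gamma}$ is acyclic, i.e. its cohomology vanishes in every degree.
   Context: Fix $n\ge 1$ and scalars $q_{i,j}\in k^*$ ($1\le i,j\le n$) with $q_{j,i}=q_{i,j}^{-1}$ and $q_{i,i}=-1$. Let $\Lambda_{\mathbf q}=k\langle x_1,\dots,x_n\mid x_ix_j=-q_{i,j}x_jx_i,\ x_i^2=0\ (1\le i,j\le n)\rangle$. For $\alpha\in\{0,1\}^n$ write $x^\alpha=x_1^{\alpha_1}\cdots x_n^{\alpha_n}$. Let $G$ be a finite group acting on $\Lambda_{\mathbf q}$ by algebra automorphisms diagonally: ${}^gx_i=\chi_{g,i}x_i$ with $\chi_{g,i}\in k$. The skew group algebra $\Lambda_{\mathbf q}\rtimes G$ is $\Lambda_{\mathbf q}\otimes kG$ with $(\lambda\otimes g)(\mu\otimes h)=\lambda({}^g\mu)\otimes gh$; it is a $\Lambda_{\mathbf q}$-bimodule via $\lambda\mapsto\lambda\otimes1$, and for each $g\in G$, $\Lambda_{\mathbf q}\otimes g$ is a sub-bimodule. For $\beta\in\mathbb N^n$ let $|\beta|=\beta_1+\dots+\beta_n$ and let $[j]\in\mathbb N^n$ be the $j$-th unit vector. Let $\mathbb K$ be the complex of $\Lambda_{\mathbf q}^e$-modules ($\Lambda^e=\Lambda\otimes\Lambda^{op}$)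 with $\mathbb K_m=\bigoplus_{\beta\in\mathbb N^n,|\beta|=m}\Lambda_{\mathbf q}\epsilon_\beta\Lambda_{\mathbf q}$, free on generators $\epsilon_\beta$, with differential $\delta_m(\epsilon_\beta)=\sum_{j=1}^n\big(\prod_{l<j}q_{l,j}^{\beta_l}\,x_j\epsilon_{\beta-[j]}+(-1)^{\sum_{l\le j}\beta_l}\prod_{l>j}(-q_{j,l})^{\beta_l}\,\epsilon_{\beta-[j]}x_j\big)$ (where $\epsilon_{\beta-[j]}:=0$ if $\beta_j=0$), augmented by $\epsilon_0\mapsto 1\in\Lambda_{\mathbf q}$; it is a projective $\Lambda_{\mathbf q}^e$-resolution of $\Lambda_{\mathbf q}$. For $\alpha\in\{0,1\}^n$, $\beta\in\mathbb N^n$, $g\in G$, let $(x^\alpha\otimes g)\epsilon_\beta^*\in\operatorname{Hom}_{\Lambda_{\mathbf q}^e}(\mathbb K_{|\beta|},\Lambda_{\mathbf q}\otimes g)$ be the map sending $\epsilon_\beta\mapsto x^\alpha\otimes g$ and $\epsilon_{\beta'}\mapsto 0$ for $\beta'\ne\beta$. The cochain complex $\operatorname{Hom}_{\Lambda_{\mathbf q}^e}(\mathbb K,\Lambda_{\mathbf q}\otimes g)$ has the differential induced by $\delta$ (precomposition). For $\gamma\in(\mathbb N\cup\{-1\})^n$ let $K^m_{g,\gamma}=\operatorname{span}_k\{(x^\alpha\otimes g)\epsilon_\beta^*\mid \alpha\in\{0,1\}^n,\beta\in\mathbb N^n,|\beta|=m,\beta-\alpha=\gamma\}$; then $K_{g,\gamma}=\bigoplus_m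 K^m_{g,\gamma}$ is a subcomplex of $\operatorname{Hom}_{\Lambda_{\mathbf q}^e}(\mathbb K,\Lambda_{\mathbf q}\otimes g)$. Define $C_g=\{\gamma\in(\mathbb N\cup\{-1\})^n\mid \text{for all } l,\ \gamma_l=-1 \text{ or } (-1)^{\gamma_l}\prod_{k\ne l}(-q_{k,l})^{\gamma_k}=\chi_{g,l}\}$. *)

theory Defs
  imports Main "HOL-Algebra.Group"
begin

text \<open>Indices run over {1..n}. Multi-indices are functions nat => nat
vanishing outside {1..n}. The algebra Lambda_q is modelled by its PBW basis
x^alpha (alpha in {0,1}^n): an element is its coefficient function on alpha.\<close>

definition bitvecs :: "nat \<Rightarrow> (nat \<Rightarrow> nat) set" where
  "bitvecs n = {\<alpha>. (\<forall>i. \<alpha> i \<le> 1) \<and> (\<forall>i. i \<notin> {1..n} \<longrightarrow> \<alpha> i = 0)}"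

definition multideg :: "nat \<Rightarrow> nat \<Rightarrow> (nat \<Rightarrow> nat) set" where
  "multideg n m = {\<beta>. (\<forall>i. i \<notin> {1..n} \<longrightarrow> \<beta> i = 0) \<and> (\<Sum>i\<in>{1..n}. \<beta> i) = m}"

definition unitv :: "nat \<Rightarrow> nat \<Rightarrow> nat" where
  "unitv j = (\<lambda>i. if i = j then 1 else 0)"

text \<open>Structure constant: x^alpha * x^alpha' = mono_mult q n alpha alpha' * x^(alpha+alpha'),
obtained by reordering using x_i x_j = - q_{i,j} x_j x_i and x_i^2 = 0.\<close>
definition mono_mult :: "(nat \<Rightarrow> nat \<Rightarrow> 'k::field) \<Rightarrow> nat \<Rightarrow> (nat \<Rightarrow> nat) \<Rightarrow> (nat \<Rightarrow> nat) \<Rightarrow> 'k" where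
  "mono_mult q n \<alpha> \<alpha>' =
     (if (\<exists>i\<in>{1..n}. \<alpha> i = 1 \<and> \<alpha>' i = 1) then 0
      else (\<Prod>i\<in>{i\<in>{1..n}. \<alpha> i = 1}. \<Prod>j\<in>{j\<in>{1..n}. \<alpha>' j = 1 \<and> j < i}. - q i j))"

definition lam_mult :: "(nat \<Rightarrow> nat \<Rightarrow> 'k::field) \<Rightarrow> nat \<Rightarrow> ((nat \<Rightarrow> nat) \<Rightarrow> 'k) \<Rightarrow> ((nat \<Rightarrow> nat) \<Rightarrow> 'k) \<Rightarrow> ((nat \<Rightarrow> nat) \<Rightarrow> 'k)" where
  "lam_mult q n a b = (\<lambda>\<alpha>''. \<Sum>\<alpha>\<in>bitvecs n. \<Sum>\<alpha>'\<in>bitvecs n.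
      if (\<lambda>i. \<alpha> i + \<alpha>' i) = \<alpha>'' then a \<alpha> * b \<alpha>' * mono_mult q n \<alpha> \<alpha>' else 0)"

definition gen :: "nat \<Rightarrow> ((nat \<Rightarrow> nat) \<Rightarrow> 'k::field)" where
  "gen j = (\<lambda>\<alpha>. if \<alpha> = unitv j then 1 else 0)"

text \<open>Diagonal action of g: x_i maps to chi_i x_i.\<close>
definition gact :: "nat \<Rightarrow> (nat \<Rightarrow> 'k::field) \<Rightarrow> ((nat \<Rightarrow> nat) \<Rightarrow> 'k) \<Rightarrow> ((nat \<Rightarrow> nat) \<Rightarrow> 'k)" where
  "gact n ch a = (\<lambda>\<alpha>. (\<Prod>i\<in>{1..n}. ch i ^ \<alpha> i) * a \<alpha>)"

text \<open>An element of Hom_{Lambda^e}(K_m, Lambda_q \<otimes> g) is determined by the images of the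
free generators eps_beta (|beta| = m); phi beta alpha is the coefficient of x^alpha \<otimes> g
in the image of eps_beta.\<close>
definition HomC :: "nat \<Rightarrow> nat \<Rightarrow> ((nat \<Rightarrow> nat) \<Rightarrow> (nat \<Rightarrow> nat) \<Rightarrow> 'k::field) set" where
  "HomC n m = {\<phi>. \<forall>\<beta> \<alpha>. \<phi> \<beta> \<alpha> \<noteq> 0 \<longrightarrow> \<beta> \<in> multideg n m \<and> \<alpha> \<in> bitvecs n}"

text \<open>Coefficients of the differential delta of K.\<close>
definition coef1 :: "(nat \<Rightarrow> nat \<Rightarrow> 'k::field) \<Rightarrow> nat \<Rightarrow> (nat \<Rightarrow> nat) \<Rightarrow> nat \<Rightarrow> 'k" where
  "coef1 q n \<beta> j = (\<Prod>l\<in>{l\<in>{1..n}. l < j}. q l j ^ \<beta> l)"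

definition coef2 :: "(nat \<Rightarrow> nat \<Rightarrow> 'k::field) \<Rightarrow> nat \<Rightarrow> (nat \<Rightarrow> nat) \<Rightarrow> nat \<Rightarrow> 'k" where
  "coef2 q n \<beta> j = (-1) ^ (\<Sum>l\<in>{l\<in>{1..n}. l \<le> j}. \<beta> l) * (\<Prod>l\<in>{l\<in>{1..n}. j < l}. (- q j l) ^ \<beta> l)"

text \<open>Differential of Hom(K, Lambda_q \<otimes> g) induced by delta (precomposition):
(d phi)(eps_beta) = phi(delta eps_beta), using the bimodule structure
lambda . (mu \<otimes> g) = lambda mu \<otimes> g and (mu \<otimes> g) . lambda = mu (g lambda) \<otimes> g.\<close>
definition hdiff :: "(nat \<Rightarrow> nat \<Rightarrow> 'k::field) \<Rightarrow> nat \<Rightarrow> (nat \<Rightarrow> 'k) \<Rightarrow>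
    ((nat \<Rightarrow> nat) \<Rightarrow> (nat \<Rightarrow> nat) \<Rightarrow> 'k) \<Rightarrow> ((nat \<Rightarrow> nat) \<Rightarrow> (nat \<Rightarrow> nat) \<Rightarrow> 'k)" where
  "hdiff q n ch \<phi> = (\<lambda>\<beta> \<alpha>. \<Sum>j\<in>{1..n}. if \<beta> j = 0 then 0 else
      coef1 q n \<beta> j * lam_mult q n (gen j) (\<phi> (\<beta>(j := \<beta> j - 1))) \<alpha>
    + coef2 q n \<beta> j * lam_mult q n (\<phi> (\<beta>(j := \<beta> j - 1))) (gact n ch (gen j)) \<alpha>)"

definition Kgam :: "nat \<Rightarrow> (nat \<Rightarrow> int) \<Rightarrow> nat \<Rightarrow> ((nat \<Rightarrow> nat) \<Rightarrow> (nat \<Rightarrow> nat) \<Rightarrow> 'k::field) set" where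
  "Kgam n \<gamma> m = {\<phi> \<in> HomC n m. \<forall>\<beta> \<alpha>. \<phi> \<beta> \<alpha> \<noteq> 0 \<longrightarrow>
       (\<forall>l\<in>{1..n}. int (\<beta> l) - int (\<alpha> l) = \<gamma> l)}"

definition in_Cg :: "(nat \<Rightarrow> nat \<Rightarrow> 'k::field) \<Rightarrow> nat \<Rightarrow> (nat \<Rightarrow> 'k) \<Rightarrow> (nat \<Rightarrow> int) \<Rightarrow> bool" where
  "in_Cg q n ch \<gamma> \<longleftrightarrow> (\<forall>l\<in>{1..n}. \<gamma> l = -1 \<or>
      (-1) powi (\<gamma> l) * (\<Prod>k\<in>{1..n} - {l}. (- q k l) powi (\<gamma> k)) = ch l)"

end

theory Submission
  imports Defs
begin


lemma finite_bitvecs: "finite (bitvecs n)"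
proof -
  have "bitvecs n \<subseteq> (\<lambda>S i. if i \<in> S then 1 else 0) ` Pow {1..n}"
  proof
    fix a assume a: "a \<in> bitvecs n"
    have "a = (\<lambda>i. if i \<in> {i\<in>{1..n}. a i = 1} then 1 else 0)"
    proof
      fix i
      have "a i \<le> 1" "i \<notin> {1..n} \<Longrightarrow> a i = 0" using a by (auto simp: bitvecs_def)
      then show "a i = (if i \<in> {i\<in>{1..n}. a i = 1} then 1 else 0)" by auto
    qed
    then show "a \<in> (\<lambda>S i. if i \<in> S then 1 else 0) ` Pow {1..n}" by blast
  qed
  then show ?thesis by (rule finite_subset) auto
qed

lemma unitv_bitvecs: "j \<in> {1..n} \<Longrightarrow> unitv j \<in> bitvecs n"
  by (auto simp: bitvecs_def unitv_def)

lemma sum_collapse_left: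
  assumes j: "j \<in> {1..n}"
  shows "(\<Sum>\<alpha>'\<in>bitvecs n. if (\<lambda>i. unitv j i + \<alpha>' i) = \<alpha> then f \<alpha>' else 0)
    = (if 1 \<le> \<alpha> j \<and> \<alpha>(j := \<alpha> j - 1) \<in> bitvecs n then f (\<alpha>(j := \<alpha> j - 1)) else 0)"
proof -
  have eq: "((\<lambda>i. unitv j i + \<alpha>' i) = \<alpha>) \<longleftrightarrow> (\<alpha>' = \<alpha>(j := \<alpha> j - 1) \<and> 1 \<le> \<alpha> j)" for \<alpha>'
  proof
    assume h: "(\<lambda>i. unitv j i + \<alpha>' i) = \<alpha>"
    have hi: "\<And>i. unitv j i + \<alpha>' i = \<alpha> i" using h by metis
    have hj: "1 + \<alpha>' j = \<alpha> j" using hi[of j] by (simp add: unitv_def)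
    have ho: "\<alpha>' i = \<alpha> i" if "i \<noteq> j" for i using hi[of i] that by (simp add: unitv_def)
    show "\<alpha>' = \<alpha>(j := \<alpha> j - 1) \<and> 1 \<le> \<alpha> j"
    proof
      show "\<alpha>' = \<alpha>(j := \<alpha> j - 1)"
      proof
        fix i show "\<alpha>' i = (\<alpha>(j := \<alpha> j - 1)) i" using hj ho by (cases "i = j") auto
      qed
    qed (use hj in simp)
  next
    assume "\<alpha>' = \<alpha>(j := \<alpha> j - 1) \<and> 1 \<le> \<alpha> j"
    then show "(\<lambda>i. unitv j i + \<alpha>' i) = \<alpha>" by (auto simp: unitv_def fun_eq_iff)
  qed
  show ?thesis (is "?lhs = ?rhs")
  proof -
    have "(\<Sum>\<alpha>'\<in>bitvecs n. if (\<lambda>i. unitv j i + \<alpha>' i) = \<alpha> then f \<alpha>' else 0)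
      = (\<Sum>\<alpha>'\<in>bitvecs n. if 1 \<le> \<alpha> j then (if \<alpha>' = \<alpha>(j := \<alpha> j - 1) then f \<alpha>' else 0) else 0)"
      by (rule sum.cong) (auto simp: eq)
    also have "\<dots> = (if 1 \<le> \<alpha> j then (\<Sum>\<alpha>'\<in>bitvecs n. if \<alpha>' = \<alpha>(j := \<alpha> j - 1) then f \<alpha>' else 0) else 0)"
      by simp
    also have "\<dots> = ?rhs" using finite_bitvecs[of n] by (simp add: sum.delta')
    finally show ?thesis .
  qed
qed

lemma sum_collapse_right:
  assumes j: "j \<in> {1..n}"
  shows "(\<Sum>\<alpha>'\<in>bitvecs n. if (\<lambda>i. \<alpha>' i + unitv j i) = \<alpha> then f \<alpha>' else 0)
    = (if 1 \<le> \<alpha> j \<and> \<alpha>(j := \<alpha> j - 1) \<in> bitvecs n then f (\<alpha>(j := \<alpha> j - 1)) else 0)"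
  using sum_collapse_left[OF j, of \<alpha> f] by (simp add: add.commute)

lemma mm_zero_left: "j \<in> {1..n} \<Longrightarrow> b j = 1 \<Longrightarrow> mono_mult q n (unitv j) b = 0"
  by (auto simp: mono_mult_def unitv_def)
lemma mm_zero_right: "j \<in> {1..n} \<Longrightarrow> b j = 1 \<Longrightarrow> mono_mult q n b (unitv j) = 0"
  by (auto simp: mono_mult_def unitv_def)

lemma lam_mult_left:
  assumes j: "j \<in> {1..n}" and supp: "\<forall>x. a x \<noteq> 0 \<longrightarrow> x \<in> bitvecs n"
  shows "lam_mult q n (\<lambda>x. if x = unitv j then d else 0) a \<alpha>
     = (if \<alpha> j = 1 then d * a (\<alpha>(j:=0)) * mono_mult q n (unitv j) (\<alpha>(j:=0)) else 0)"
proof -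
  let ?e = "unitv j"
  have "lam_mult q n (\<lambda>x. if x = ?e then d else 0) a \<alpha>
    = (\<Sum>\<alpha>1\<in>bitvecs n. if \<alpha>1 = ?e then (\<Sum>\<alpha>'\<in>bitvecs n. if (\<lambda>i. ?e i + \<alpha>' i) = \<alpha> then d * a \<alpha>' * mono_mult q n ?e \<alpha>' else 0) else 0)"
    unfolding lam_mult_def
  proof (rule sum.cong[OF refl])
    fix x assume "x \<in> bitvecs n"
    show "(\<Sum>\<alpha>'\<in>bitvecs n. if (\<lambda>i. x i + \<alpha>' i) = \<alpha> then (if x = ?e then d else 0) * a \<alpha>' * mono_mult q n x \<alpha>' else 0)
      = (if x = ?e then (\<Sum>\<alpha>'\<in>bitvecs n. if (\<lambda>i. ?e i + \<alpha>' i) = \<alpha> then d * a \<alpha>' * mono_mult q n ?e \<alpha>' else 0) else 0)"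
    proof (cases "x = ?e")
      case False
      then have "\<And>\<alpha>'. (if (\<lambda>i. x i + \<alpha>' i) = \<alpha> then (if x = ?e then d else 0) * a \<alpha>' * mono_mult q n x \<alpha>' else 0) = 0"
        by simp
      then show ?thesis using False by simp
    next
      case True show ?thesis unfolding True by simp
    qed
  qed
  also have "\<dots> = (\<Sum>\<alpha>'\<in>bitvecs n. if (\<lambda>i. ?e i + \<alpha>' i) = \<alpha> then d * a \<alpha>' * mono_mult q n ?e \<alpha>' else 0)"
    using finite_bitvecs[of n] unitv_bitvecs[OF j] by (simp add: sum.delta')
  also have "\<dots> = (if 1 \<le> \<alpha> j \<and> \<alpha>(j := \<alpha> j - 1) \<in> bitvecs n then d * a (\<alpha>(j := \<alpha> j - 1)) * mono_mult q n ?e (\<alpha>(j := \<alpha> j - 1)) else 0)"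
    by (rule sum_collapse_left[OF j])
  also have "\<dots> = (if \<alpha> j = 1 then d * a (\<alpha>(j:=0)) * mono_mult q n ?e (\<alpha>(j:=0)) else 0)"
  proof (cases "\<alpha> j = 1")
    case True then show ?thesis using supp by auto
  next
    case False
    show ?thesis
    proof (cases "1 \<le> \<alpha> j \<and> \<alpha>(j := \<alpha> j - 1) \<in> bitvecs n")
      case True
      then have "\<forall>i. (\<alpha>(j := \<alpha> j - 1)) i \<le> 1" by (simp add: bitvecs_def)
      then have "\<alpha> j - 1 \<le> 1" by (metis fun_upd_same)
      with True False have "(\<alpha>(j := \<alpha> j - 1)) j = 1" by auto
      then have "mono_mult q n ?e (\<alpha>(j := \<alpha> j - 1)) = 0" by (rule mm_zero_left[OF j])
      then show ?thesis using False by simp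
    qed (use False in auto)
  qed
  finally show ?thesis .
qed

lemma lam_mult_right:
  assumes j: "j \<in> {1..n}" and supp: "\<forall>x. a x \<noteq> 0 \<longrightarrow> x \<in> bitvecs n"
  shows "lam_mult q n a (\<lambda>x. if x = unitv j then d else 0) \<alpha>
     = (if \<alpha> j = 1 then a (\<alpha>(j:=0)) * d * mono_mult q n (\<alpha>(j:=0)) (unitv j) else 0)"
proof -
  let ?e = "unitv j"
  have "lam_mult q n a (\<lambda>x. if x = ?e then d else 0) \<alpha>
    = (\<Sum>\<alpha>1\<in>bitvecs n. (\<Sum>\<alpha>'\<in>bitvecs n. if \<alpha>' = ?e then (if (\<lambda>i. \<alpha>1 i + ?e i) = \<alpha> then a \<alpha>1 * d * mono_mult q n \<alpha>1 ?e else 0) else 0))"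
    unfolding lam_mult_def by (intro sum.cong) auto
  also have "\<dots> = (\<Sum>\<alpha>1\<in>bitvecs n. if (\<lambda>i. \<alpha>1 i + ?e i) = \<alpha> then a \<alpha>1 * d * mono_mult q n \<alpha>1 ?e else 0)"
    using finite_bitvecs[of n] unitv_bitvecs[OF j] by (simp add: sum.delta')
  also have "\<dots> = (if 1 \<le> \<alpha> j \<and> \<alpha>(j := \<alpha> j - 1) \<in> bitvecs n then a (\<alpha>(j := \<alpha> j - 1)) * d * mono_mult q n (\<alpha>(j := \<alpha> j - 1)) ?e else 0)"
    by (rule sum_collapse_right[OF j])
  also have "\<dots> = (if \<alpha> j = 1 then a (\<alpha>(j:=0)) * d * mono_mult q n (\<alpha>(j:=0)) ?e else 0)"
  proof (cases "\<alpha> j = 1")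
    case True then show ?thesis using supp by auto
  next
    case False
    show ?thesis
    proof (cases "1 \<le> \<alpha> j \<and> \<alpha>(j := \<alpha> j - 1) \<in> bitvecs n")
      case True
      then have "\<forall>i. (\<alpha>(j := \<alpha> j - 1)) i \<le> 1" by (simp add: bitvecs_def)
      then have "\<alpha> j - 1 \<le> 1" by (metis fun_upd_same)
      with True False have "(\<alpha>(j := \<alpha> j - 1)) j = 1" by auto
      then have "mono_mult q n (\<alpha>(j := \<alpha> j - 1)) ?e = 0" by (rule mm_zero_right[OF j])
      then show ?thesis using False by simp
    qed (use False in auto)
  qed
  finally show ?thesis .
qed


lemma mm1:
  assumes j: "j \<in> {1..n}" and bj: "b j = 0"
  shows "mono_mult q n (unitv j) b = (\<Prod>l\<in>{l\<in>{1..n}. l<j}. if b l = 1 then - q j l else 1)"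
proof -
  have s1: "{i\<in>{1..n}. unitv j i = 1} = {j}" using j by (auto simp: unitv_def)
  have s2: "{j'\<in>{1..n}. b j' = 1 \<and> j' < j} = {x\<in>{l\<in>{1..n}. l<j}. b x = 1}" by auto
  have nx: "\<not> (\<exists>i\<in>{1..n}. unitv j i = 1 \<and> b i = 1)" using bj by (auto simp: unitv_def)
  have "mono_mult q n (unitv j) b = (\<Prod>j'\<in>{j'\<in>{1..n}. b j' = 1 \<and> j' < j}. - q j j')"
    unfolding mono_mult_def s1 if_not_P[OF nx] by simp
  also have "\<dots> = (\<Prod>l\<in>{l\<in>{1..n}. l<j}. if b l = 1 then - q j l else 1)"
    unfolding s2 by (rule prod.inter_filter) simp
  finally show ?thesis .
qed

lemma mm2:
  assumes j: "j \<in> {1..n}" and bj: "b j = 0"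
  shows "mono_mult q n b (unitv j) = (\<Prod>l\<in>{l\<in>{1..n}. j<l}. if b l = 1 then - q l j else 1)"
proof -
  have s1: "{j'\<in>{1..n}. unitv j j' = 1 \<and> j' < i} = (if j < i then {j} else {})" for i
    using j by (auto simp: unitv_def)
  have nx: "\<not> (\<exists>i\<in>{1..n}. b i = 1 \<and> unitv j i = 1)" using bj by (auto simp: unitv_def)
  have "mono_mult q n b (unitv j) = (\<Prod>i\<in>{i\<in>{1..n}. b i = 1}. if j < i then - q i j else 1)"
    unfolding mono_mult_def if_not_P[OF nx] by (rule prod.cong) (simp_all only: s1 split: if_split, simp)
  also have "\<dots> = (\<Prod>i\<in>{1..n}. if b i = 1 then (if j < i then - q i j else 1) else 1)"
    by (rule prod.inter_filter) simp
  also have "\<dots> = (\<Prod>i\<in>{1..n}. if j < i then (if b i = 1 then - q i j else 1) else 1)"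
    by (rule prod.cong) auto
  also have "\<dots> = (\<Prod>l\<in>{l\<in>{1..n}. j<l}. if b l = 1 then - q l j else 1)"
    by (rule prod.inter_filter[symmetric]) simp
  finally show ?thesis .
qed

lemma gact_gen:
  assumes j: "j \<in> {1..n}"
  shows "gact n ch (gen j) = (\<lambda>x. if x = unitv j then ch j else 0)"
proof
  fix x
  have "(\<Prod>i\<in>{1..n}. ch i ^ unitv j i) = (\<Prod>i\<in>{1..n}. if i = j then ch i else 1)"
    by (rule prod.cong) (auto simp: unitv_def)
  also have "\<dots> = ch j" using j by (simp add: prod.delta')
  finally show "gact n ch (gen j) x = (if x = unitv j then ch j else 0)"
    by (auto simp: gact_def gen_def)
qed



definition sg :: "nat \<Rightarrow> (nat \<Rightarrow> nat) \<Rightarrow> nat \<Rightarrow> 'k::field" where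
  "sg n \<alpha> j = (\<Prod>i\<in>{i\<in>{1..n}. i<j}. (-1) ^ (\<alpha> i))"

definition cc :: "(nat \<Rightarrow> nat \<Rightarrow> 'k::field) \<Rightarrow> nat \<Rightarrow> (nat \<Rightarrow> 'k) \<Rightarrow> (nat \<Rightarrow> int) \<Rightarrow> nat \<Rightarrow> 'k" where
  "cc q n ch \<gamma> j = (\<Prod>l\<in>{l\<in>{1..n}. l<j}. q l j powi \<gamma> l)
     + ch j * (-1) powi (\<gamma> j + 1) * (\<Prod>l\<in>{l\<in>{1..n}. l<j}. (-1) powi \<gamma> l)
       * (\<Prod>l\<in>{l\<in>{1..n}. j<l}. (- q j l) powi \<gamma> l)"

lemma f1:
  fixes x :: "'k::field"
  assumes "x \<noteq> 0" "a \<le> 1"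
  shows "x ^ b * (if a = 1 then - inverse x else 1) = (-1)^a * x powi (int b - int a)"
proof (cases "a = 1")
  case True
  have "x powi (int b - 1) = x ^ b / x" using assms by (simp add: power_int_diff)
  then show ?thesis using True by (simp add: divide_inverse)
next
  case False then have "a = 0" using assms by auto
  then show ?thesis by simp
qed

lemma f2:
  fixes y :: "'k::field"
  assumes "y \<noteq> 0" "a \<le> 1"
  shows "y ^ b * (if a = 1 then inverse y else 1) = y powi (int b - int a)"
proof (cases "a = 1")
  case True
  have "y powi (int b - 1) = y ^ b / y" using assms by (simp add: power_int_diff)
  then show ?thesis using True by (simp add: divide_inverse)
next
  case False then have "a = 0" using assms by auto
  then show ?thesis by simp
qed

lemma f3:
  shows "(-1::'k::field) ^ b = (-1)^a * (-1) powi (int b - int a)"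
proof -
  have "(-1::'k) powi (int b - int a) = (-1)^b / (-1)^a" by (simp add: power_int_diff)
  then show ?thesis by simp
qed

lemma Ecoef:
  fixes q :: "nat \<Rightarrow> nat \<Rightarrow> 'k::field"
  assumes j: "j \<in> {1..n}" and aj: "\<alpha> j = 1" and bj: "\<beta> j \<noteq> 0"
    and abit: "\<alpha>(j:=0) \<in> bitvecs n"
    and H: "\<forall>l\<in>{1..n}. int ((\<beta>(j:=\<beta> j - 1)) l) - int ((\<alpha>(j:=0)) l) = \<gamma> l"
    and q_nz: "\<forall>i\<in>{1..n}. \<forall>j\<in>{1..n}. q i j \<noteq> 0"
    and q_inv: "\<forall>i\<in>{1..n}. \<forall>j\<in>{1..n}. q j i = inverse (q i j)"
  shows "coef1 q n \<beta> j * mono_mult q n (unitv j) (\<alpha>(j:=0))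
       + coef2 q n \<beta> j * ch j * mono_mult q n (\<alpha>(j:=0)) (unitv j) = sg n \<alpha> j * cc q n ch \<gamma> j"
proof -
  define P where "P = {l\<in>{1..n}. l<j}"
  define Q where "Q = {l\<in>{1..n}. j<l}"
  have gl: "\<gamma> l = int (\<beta> l) - int (\<alpha> l)" "\<alpha> l \<le> 1" if "l \<in> {1..n}" "l \<noteq> j" for l
  proof -
    have "int ((\<beta>(j:=\<beta> j - 1)) l) - int ((\<alpha>(j:=0)) l) = \<gamma> l" using H that(1) by blast
    then show "\<gamma> l = int (\<beta> l) - int (\<alpha> l)" using that(2) by simp
    have "(\<alpha>(j:=0)) l \<le> 1" using abit unfolding bitvecs_def by blast
    then show "\<alpha> l \<le> 1" using that(2) by simp
  qed
  have gj: "\<gamma> j = int (\<beta> j) - 1"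
  proof -
    have "int ((\<beta>(j:=\<beta> j - 1)) j) - int ((\<alpha>(j:=0)) j) = \<gamma> j" using H j by blast
    then show ?thesis using bj by (simp add: of_nat_diff)
  qed
  have m1: "mono_mult q n (unitv j) (\<alpha>(j:=0)) = (\<Prod>l\<in>P. if \<alpha> l = 1 then - q j l else 1)"
  proof -
    have "mono_mult q n (unitv j) (\<alpha>(j:=0)) = (\<Prod>l\<in>P. if (\<alpha>(j:=0)) l = 1 then - q j l else 1)"
      unfolding P_def by (rule mm1[OF j]) simp
    also have "\<dots> = (\<Prod>l\<in>P. if \<alpha> l = 1 then - q j l else 1)"
      by (rule prod.cong[OF refl]) (simp add: P_def)
    finally show ?thesis .
  qed
  have m2: "mono_mult q n (\<alpha>(j:=0)) (unitv j) = (\<Prod>l\<in>Q. if \<alpha> l = 1 then - q l j else 1)"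
  proof -
    have "mono_mult q n (\<alpha>(j:=0)) (unitv j) = (\<Prod>l\<in>Q. if (\<alpha>(j:=0)) l = 1 then - q l j else 1)"
      unfolding Q_def by (rule mm2[OF j]) simp
    also have "\<dots> = (\<Prod>l\<in>Q. if \<alpha> l = 1 then - q l j else 1)"
      by (rule prod.cong[OF refl]) (simp add: Q_def)
    finally show ?thesis .
  qed
  have part1: "coef1 q n \<beta> j * mono_mult q n (unitv j) (\<alpha>(j:=0))
      = sg n \<alpha> j * (\<Prod>l\<in>P. q l j powi \<gamma> l)"
  proof -
    have c1: "coef1 q n \<beta> j = (\<Prod>l\<in>P. q l j ^ \<beta> l)" unfolding coef1_def P_def ..
    have "coef1 q n \<beta> j * mono_mult q n (unitv j) (\<alpha>(j:=0))
        = (\<Prod>l\<in>P. q l j ^ \<beta> l) * (\<Prod>l\<in>P. if \<alpha> l = 1 then - q j l else 1)"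
      by (simp only: c1 m1)
    also have "\<dots> = (\<Prod>l\<in>P. q l j ^ \<beta> l * (if \<alpha> l = 1 then - q j l else 1))"
      by (rule prod.distrib[symmetric])
    also have "\<dots> = (\<Prod>l\<in>P. (-1) ^ \<alpha> l * q l j powi \<gamma> l)"
    proof (rule prod.cong[OF refl])
      fix l assume l: "l \<in> P"
      then have l1: "l \<in> {1..n}" "l \<noteq> j" by (auto simp: P_def)
      have qi: "q j l = inverse (q l j)" using q_inv l1 j by blast
      have qn: "q l j \<noteq> 0" using q_nz l1 j by blast
      show "q l j ^ \<beta> l * (if \<alpha> l = 1 then - q j l else 1) = (-1) ^ \<alpha> l * q l j powi \<gamma> l"
        unfolding qi gl(1)[OF l1] by (rule f1[OF qn gl(2)[OF l1]])
    qed
    also have "\<dots> = sg n \<alpha> j * (\<Prod>l\<in>P. q l j powi \<gamma> l)"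
      by (simp only: prod.distrib sg_def P_def)
    finally show ?thesis .
  qed
  have s1: "{l\<in>{1..n}. l \<le> j} = insert j P" using j by (auto simp: P_def)
  have jP: "j \<notin> P" "finite P" by (auto simp: P_def)
  have sgn: "(-1::'k) ^ (\<Sum>l\<in>{l\<in>{1..n}. l \<le> j}. \<beta> l)
      = (-1) powi (\<gamma> j + 1) * (sg n \<alpha> j * (\<Prod>l\<in>P. (-1) powi \<gamma> l))"
  proof -
    have "(-1::'k) ^ (\<Sum>l\<in>{l\<in>{1..n}. l \<le> j}. \<beta> l) = (\<Prod>l\<in>insert j P. (-1) ^ \<beta> l)"
      unfolding power_sum s1 ..
    also have "\<dots> = (-1) ^ \<beta> j * (\<Prod>l\<in>P. (-1) ^ \<beta> l)" using jP by simp
    also have "(-1::'k) ^ \<beta> j = (-1) powi (\<gamma> j + 1)" using gj by (simp flip: power_int_of_nat)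
    also have "(\<Prod>l\<in>P. (-1::'k) ^ \<beta> l) = (\<Prod>l\<in>P. (-1) ^ \<alpha> l * (-1) powi \<gamma> l)"
      by (rule prod.cong) (use gl f3 in \<open>auto simp: P_def\<close>)
    also have "\<dots> = sg n \<alpha> j * (\<Prod>l\<in>P. (-1) powi \<gamma> l)"
      unfolding prod.distrib sg_def P_def ..
    finally show ?thesis .
  qed
  have part2: "(\<Prod>l\<in>Q. (- q j l) ^ \<beta> l) * mono_mult q n (\<alpha>(j:=0)) (unitv j)
      = (\<Prod>l\<in>Q. (- q j l) powi \<gamma> l)"
  proof -
    have "(\<Prod>l\<in>Q. (- q j l) ^ \<beta> l) * mono_mult q n (\<alpha>(j:=0)) (unitv j)
        = (\<Prod>l\<in>Q. (- q j l) ^ \<beta> l) * (\<Prod>l\<in>Q. if \<alpha> l = 1 then - q l j else 1)"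
      by (simp only: m2)
    also have "\<dots> = (\<Prod>l\<in>Q. (- q j l) ^ \<beta> l * (if \<alpha> l = 1 then - q l j else 1))"
      by (rule prod.distrib[symmetric])
    also have "\<dots> = (\<Prod>l\<in>Q. (- q j l) powi \<gamma> l)"
    proof (rule prod.cong[OF refl])
      fix l assume l: "l \<in> Q"
      then have l1: "l \<in> {1..n}" "l \<noteq> j" unfolding Q_def by auto
      have "q l j = inverse (q j l)" using q_inv l1 j by blast
      then have qi: "- q l j = inverse (- q j l)" by (simp add: inverse_minus_eq)
      have qn: "- q j l \<noteq> 0" using q_nz l1 j by simp
      show "(- q j l) ^ \<beta> l * (if \<alpha> l = 1 then - q l j else 1) = (- q j l) powi \<gamma> l"
        unfolding qi gl(1)[OF l1] by (rule f2[OF qn gl(2)[OF l1]])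
    qed
    finally show ?thesis .
  qed
  have c2: "coef2 q n \<beta> j = (-1::'k) ^ (\<Sum>l\<in>{l\<in>{1..n}. l \<le> j}. \<beta> l) * (\<Prod>l\<in>Q. (- q j l) ^ \<beta> l)"
    unfolding coef2_def Q_def ..
  show ?thesis
    unfolding part1 c2 sgn cc_def P_def[symmetric] Q_def[symmetric]
    using part2 by (simp add: algebra_simps)
qed



lemma KgamD:
  assumes "\<phi> \<in> Kgam n \<gamma> m" "\<phi> b a \<noteq> 0"
  shows "b \<in> multideg n m" "a \<in> bitvecs n" "\<forall>l\<in>{1..n}. int (b l) - int (a l) = \<gamma> l"
  using assms by (auto simp: Kgam_def HomC_def)

lemma HD:
  fixes q :: "nat \<Rightarrow> nat \<Rightarrow> 'k::field"
  assumes \<phi>: "\<phi> \<in> Kgam n \<gamma> m"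
    and q_nz: "\<forall>i\<in>{1..n}. \<forall>j\<in>{1..n}. q i j \<noteq> 0"
    and q_inv: "\<forall>i\<in>{1..n}. \<forall>j\<in>{1..n}. q j i = inverse (q i j)"
  shows "hdiff q n ch \<phi> \<beta> \<alpha> = (\<Sum>j\<in>{1..n}. if \<beta> j = 0 \<or> \<alpha> j \<noteq> 1 then 0
            else sg n \<alpha> j * cc q n ch \<gamma> j * \<phi> (\<beta>(j:=\<beta> j - 1)) (\<alpha>(j:=0)))"
  unfolding hdiff_def
proof (rule sum.cong[OF refl])
  fix j assume j: "j \<in> {1..n}"
  let ?b = "\<beta>(j:=\<beta> j - 1)"
  have supp: "\<forall>x. \<phi> ?b x \<noteq> 0 \<longrightarrow> x \<in> bitvecs n" using KgamD(2)[OF \<phi>] by blast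
  have L1: "lam_mult q n (gen j) (\<phi> ?b) \<alpha> = (if \<alpha> j = 1 then 1 * \<phi> ?b (\<alpha>(j:=0)) * mono_mult q n (unitv j) (\<alpha>(j:=0)) else 0)"
    unfolding gen_def by (rule lam_mult_left[OF j supp])
  have L2: "lam_mult q n (\<phi> ?b) (gact n ch (gen j)) \<alpha> = (if \<alpha> j = 1 then \<phi> ?b (\<alpha>(j:=0)) * ch j * mono_mult q n (\<alpha>(j:=0)) (unitv j) else 0)"
    unfolding gact_gen[OF j] by (rule lam_mult_right[OF j supp])
  show "(if \<beta> j = 0 then 0 else coef1 q n \<beta> j * lam_mult q n (gen j) (\<phi> ?b) \<alpha>
          + coef2 q n \<beta> j * lam_mult q n (\<phi> ?b) (gact n ch (gen j)) \<alpha>)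
     = (if \<beta> j = 0 \<or> \<alpha> j \<noteq> 1 then 0 else sg n \<alpha> j * cc q n ch \<gamma> j * \<phi> ?b (\<alpha>(j:=0)))"
  proof (cases "\<beta> j = 0 \<or> \<alpha> j \<noteq> 1")
    case True then show ?thesis unfolding L1 L2 by auto
  next
    case False
    then have bj: "\<beta> j \<noteq> 0" and aj: "\<alpha> j = 1" by auto
    show ?thesis
    proof (cases "\<phi> ?b (\<alpha>(j:=0)) = 0")
      case True then show ?thesis unfolding L1 L2 using False by simp
    next
      case nz: False
      have abit: "\<alpha>(j:=0) \<in> bitvecs n" using KgamD(2)[OF \<phi>, of "?b" "\<alpha>(j:=0)"] nz by blast
      have H: "\<forall>l\<in>{1..n}. int (?b l) - int ((\<alpha>(j:=0)) l) = \<gamma> l" using KgamD(3)[OF \<phi>, of "?b" "\<alpha>(j:=0)"] nz by blast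
      have E: "coef1 q n \<beta> j * mono_mult q n (unitv j) (\<alpha>(j:=0))
       + coef2 q n \<beta> j * ch j * mono_mult q n (\<alpha>(j:=0)) (unitv j) = sg n \<alpha> j * cc q n ch \<gamma> j"
        using Ecoef[OF j aj bj abit H q_nz q_inv] .
      have "coef1 q n \<beta> j * (1 * \<phi> ?b (\<alpha>(j:=0)) * mono_mult q n (unitv j) (\<alpha>(j:=0)))
          + coef2 q n \<beta> j * (\<phi> ?b (\<alpha>(j:=0)) * ch j * mono_mult q n (\<alpha>(j:=0)) (unitv j))
          = (coef1 q n \<beta> j * mono_mult q n (unitv j) (\<alpha>(j:=0))
       + coef2 q n \<beta> j * ch j * mono_mult q n (\<alpha>(j:=0)) (unitv j)) * \<phi> ?b (\<alpha>(j:=0))"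
        by (simp add: algebra_simps)
      then show ?thesis unfolding L1 L2 E using bj aj by simp
    qed
  qed
qed

lemma sg_nz: "sg n \<alpha> j \<noteq> (0::'k::field)"
  unfolding sg_def by (simp add: prod_zero_iff)

lemma sg_upd:
  "(sg n (x(a:=v)) l :: 'k::field) = sg n (x(a:=0)) l * (if a \<in> {1..n} \<and> a < l then (-1)^v else 1)"
proof -
  let ?I = "{i\<in>{1..n}. i<l}"
  show ?thesis
  proof (cases "a \<in> ?I")
    case True
    have f: "finite ?I" by simp
    have "sg n (x(a:=v)) l = ((-1::'k)^v) * (\<Prod>i\<in>?I-{a}. (-1) ^ ((x(a:=v)) i))"
      unfolding sg_def by (subst prod.remove[OF f True]) simp
    also have "(\<Prod>i\<in>?I-{a}. (-1::'k) ^ ((x(a:=v)) i)) = (\<Prod>i\<in>?I-{a}. (-1) ^ ((x(a:=0)) i))"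
      by (rule prod.cong) auto
    also have "(\<Prod>i\<in>?I-{a}. (-1::'k) ^ ((x(a:=0)) i)) = sg n (x(a:=0)) l"
      unfolding sg_def by (subst prod.remove[OF f True]) simp
    finally show ?thesis using True by (simp only: mult.commute if_True) simp
  next
    case False
    have "sg n (x(a:=v)) l = (sg n (x(a:=0)) l :: 'k)"
      unfolding sg_def by (rule prod.cong) (use False in auto)
    moreover have nc: "\<not> (a \<in> {1..n} \<and> a < l)" using False by simp
    ultimately show ?thesis unfolding if_not_P[OF nc] by simp
  qed
qed



lemma cc_nz:
  fixes q :: "nat \<Rightarrow> nat \<Rightarrow> 'k::field"
  assumes l: "l \<in> {1..n}"
    and q_nz: "\<forall>i\<in>{1..n}. \<forall>j\<in>{1..n}. q i j \<noteq> 0"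
    and q_inv: "\<forall>i\<in>{1..n}. \<forall>j\<in>{1..n}. q j i = inverse (q i j)"
    and ne: "(-1) powi (\<gamma> l) * (\<Prod>k\<in>{1..n} - {l}. (- q k l) powi (\<gamma> k)) \<noteq> ch l"
  shows "cc q n ch \<gamma> l \<noteq> 0"
proof
  assume c0: "cc q n ch \<gamma> l = 0"
  define P where "P = {k\<in>{1..n}. k<l}"
  define Q where "Q = {k\<in>{1..n}. l<k}"
  define A where "A = (\<Prod>k\<in>P. q k l powi \<gamma> k)"
  define B where "B = (\<Prod>k\<in>P. (-1::'k) powi \<gamma> k)"
  define C where "C = (\<Prod>k\<in>Q. (- q l k) powi \<gamma> k)"
  define C' where "C' = (\<Prod>k\<in>Q. (- q k l) powi \<gamma> k)"
  define s where "s = (-1::'k) powi \<gamma> l"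
  have s1: "(-1::'k) powi (\<gamma> l + 1) = - s" unfolding s_def by (simp add: power_int_add_1)
  have ss: "s * s = 1" unfolding s_def by (simp flip: power_int_mult_distrib)
  have BB: "B * B = 1" unfolding B_def prod.distrib[symmetric]
    by (simp flip: power_int_mult_distrib)
  have CC: "C * C' = 1" unfolding C_def C'_def prod.distrib[symmetric]
  proof (rule prod.neutral, rule ballI)
    fix k assume k: "k \<in> Q"
    then have k1: "k \<in> {1..n}" by (simp add: Q_def)
    have "q k l = inverse (q l k)" using q_inv l k1 by blast
    moreover have "q l k \<noteq> 0" using q_nz l k1 by blast
    ultimately have "(- q l k) * (- q k l) = 1" by simp
    then show "(- q l k) powi \<gamma> k * (- q k l) powi \<gamma> k = 1"
      by (simp flip: power_int_mult_distrib)
  qed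
  have eq: "A + ch l * (- s) * B * C = 0" using c0 unfolding cc_def s1
    by (simp add: A_def B_def C_def P_def Q_def)
  have split: "{1..n} - {l} = P \<union> Q" "P \<inter> Q = {}" "finite P" "finite Q"
    by (auto simp: P_def Q_def)
  have PA: "(\<Prod>k\<in>P. (- q k l) powi \<gamma> k) = B * A"
    unfolding A_def B_def prod.distrib[symmetric]
    by (rule prod.cong[OF refl]) (simp flip: power_int_mult_distrib)
  have "(\<Prod>k\<in>{1..n} - {l}. (- q k l) powi (\<gamma> k)) = B * A * C'"
    unfolding split(1) prod.union_disjoint[OF split(3,4,2)] PA C'_def ..
  with ne have ne2: "s * (B * A * C') \<noteq> ch l" unfolding s_def by simp
  have "A = ch l * s * B * C" using eq by (simp add: algebra_simps eq_neg_iff_add_eq_0)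
  then have "s * (B * A * C') = ch l * (s * s) * (B * B) * (C * C')" by (simp add: algebra_simps)
  then have "s * (B * A * C') = ch l" unfolding ss BB CC by simp
  with ne2 show False by contradiction
qed


lemma sum_upd_Suc:
  fixes \<beta> :: "nat \<Rightarrow> nat"
  assumes "l \<in> {1..n}"
  shows "(\<Sum>i\<in>{1..n}. (\<beta>(l := Suc (\<beta> l))) i) = Suc (\<Sum>i\<in>{1..n}. \<beta> i)"
proof -
  have f: "finite {1..n}" by simp
  have "(\<Sum>i\<in>{1..n}. (\<beta>(l := Suc (\<beta> l))) i) = Suc (\<beta> l) + (\<Sum>i\<in>{1..n}-{l}. (\<beta>(l := Suc (\<beta> l))) i)"
    by (subst sum.remove[OF f assms]) simp
  also have "(\<Sum>i\<in>{1..n}-{l}. (\<beta>(l := Suc (\<beta> l))) i) = (\<Sum>i\<in>{1..n}-{l}. \<beta> i)"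
    by (rule sum.cong) auto
  also have "Suc (\<beta> l) + (\<Sum>i\<in>{1..n}-{l}. \<beta> i) = Suc (\<Sum>i\<in>{1..n}. \<beta> i)"
    using sum.remove[OF f assms, of \<beta>] by simp
  finally show ?thesis .
qed

theorem lemma3p1:
  fixes q :: "nat \<Rightarrow> nat \<Rightarrow> 'k::field_char_0"
    and n :: nat
    and G :: "('g, 'b) monoid_scheme"
    and chi :: "'g \<Rightarrow> nat \<Rightarrow> 'k"
    and g :: 'g
    and \<gamma> :: "nat \<Rightarrow> int"
  assumes n: "n \<ge> 1"
    and q_nz: "\<forall>i\<in>{1..n}. \<forall>j\<in>{1..n}. q i j \<noteq> 0"
    and q_inv: "\<forall>i\<in>{1..n}. \<forall>j\<in>{1..n}. q j i = inverse (q i j)"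
    and q_diag: "\<forall>i\<in>{1..n}. q i i = -1"
    and grp: "group G" and fin: "finite (carrier G)"
    and chi_mult: "\<forall>a\<in>carrier G. \<forall>b\<in>carrier G. \<forall>i\<in>{1..n}.
                     chi (a \<otimes>\<^bsub>G\<^esub> b) i = chi a i * chi b i"
    and chi_one: "\<forall>i\<in>{1..n}. chi \<one>\<^bsub>G\<^esub> i = 1"
    and g: "g \<in> carrier G"
    and gam_range: "\<forall>l\<in>{1..n}. \<gamma> l \<ge> -1"
    and gam_supp: "\<forall>l. l \<notin> {1..n} \<longrightarrow> \<gamma> l = 0"
    and notC: "\<not> in_Cg q n (chi g) \<gamma>"
  shows "(\<forall>\<phi>\<in>Kgam n \<gamma> 0. hdiff q n (chi g) \<phi> = (\<lambda>_ _. 0) \<longrightarrow> \<phi> = (\<lambda>_ _. 0))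
       \<and> (\<forall>m. \<forall>\<phi>\<in>Kgam n \<gamma> (Suc m). hdiff q n (chi g) \<phi> = (\<lambda>_ _. 0) \<longrightarrow>
             (\<exists>\<psi>\<in>Kgam n \<gamma> m. hdiff q n (chi g) \<psi> = \<phi>))"
proof -
  let ?ch = "chi g"
  obtain l0 where l0: "l0 \<in> {1..n}" and gl0: "\<gamma> l0 \<ge> 0" and c0nz: "cc q n ?ch \<gamma> l0 \<noteq> 0"
  proof -
    obtain l where l: "l \<in> {1..n}" "\<gamma> l \<noteq> -1"
      and ne: "(-1) powi (\<gamma> l) * (\<Prod>k\<in>{1..n} - {l}. (- q k l) powi (\<gamma> k)) \<noteq> ?ch l"
      using notC unfolding in_Cg_def by blast
    have "\<gamma> l \<ge> 0" using gam_range l by force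
    moreover have "cc q n ?ch \<gamma> l \<noteq> 0" by (rule cc_nz[where ch="chi g", OF l(1) q_nz q_inv ne])
    ultimately show ?thesis using that l(1) by blast
  qed
  define c0 where "c0 = cc q n ?ch \<gamma> l0"
  have HDI: "hdiff q n ?ch \<phi> \<beta> \<alpha> = (\<Sum>j\<in>{1..n}. if \<beta> j = 0 \<or> \<alpha> j \<noteq> 1 then 0
            else sg n \<alpha> j * cc q n ?ch \<gamma> j * \<phi> (\<beta>(j:=\<beta> j - 1)) (\<alpha>(j:=0)))"
    if "\<phi> \<in> Kgam n \<gamma> m" for \<phi> m \<beta> \<alpha>
    by (rule HD[OF that q_nz q_inv])
  have fin1: "finite {1..n}" by simp
  have part0: "\<forall>\<phi>\<in>Kgam n \<gamma> 0. hdiff q n ?ch \<phi> = (\<lambda>_ _. 0) \<longrightarrow> \<phi> = (\<lambda>_ _. 0)"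
  proof (intro ballI impI)
    fix \<phi> :: "(nat \<Rightarrow> nat) \<Rightarrow> (nat \<Rightarrow> nat) \<Rightarrow> 'k"
    assume \<phi>K: "\<phi> \<in> Kgam n \<gamma> 0" and hz: "hdiff q n ?ch \<phi> = (\<lambda>_ _. 0)"
    show "\<phi> = (\<lambda>_ _. 0)"
    proof (intro ext)
      fix \<beta> \<alpha>
      show "\<phi> \<beta> \<alpha> = 0"
      proof (rule ccontr)
        assume nz: "\<phi> \<beta> \<alpha> \<noteq> 0"
        have md: "\<beta> \<in> multideg n 0" using KgamD(1)[OF \<phi>K, of \<beta> \<alpha>] nz by blast
        have H: "\<forall>l\<in>{1..n}. int (\<beta> l) - int (\<alpha> l) = \<gamma> l" using KgamD(3)[OF \<phi>K, of \<beta> \<alpha>] nz by blast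
        have b0: "\<beta> i = 0" if "i \<in> {1..n}" for i
          using md that unfolding multideg_def by (simp add: sum_eq_0_iff)
        have a0: "\<alpha> l0 = 0" using H l0 b0[OF l0] gl0 by force
        let ?b = "\<beta>(l0 := 1)" and ?a = "\<alpha>(l0 := 1)"
        have "hdiff q n ?ch \<phi> ?b ?a = 0" using hz by simp
        also have "hdiff q n ?ch \<phi> ?b ?a = (\<Sum>j\<in>{1..n}. if j = l0 then sg n ?a l0 * c0 * \<phi> \<beta> \<alpha> else 0)"
          unfolding HDI[OF \<phi>K]
        proof (rule sum.cong[OF refl])
          fix j assume j: "j \<in> {1..n}"
          show "(if ?b j = 0 \<or> ?a j \<noteq> 1 then 0 else sg n ?a j * cc q n ?ch \<gamma> j * \<phi> (?b(j := ?b j - 1)) (?a(j := 0)))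
              = (if j = l0 then sg n ?a l0 * c0 * \<phi> \<beta> \<alpha> else 0)"
          proof (cases "j = l0")
            case True
            have e1: "?b(l0 := ?b l0 - 1) = \<beta>" using b0[OF l0] by (auto simp: fun_eq_iff)
            have e2: "?a(l0 := 0) = \<alpha>" using a0 by (auto simp: fun_eq_iff)
            show ?thesis unfolding True e1 e2 c0_def by simp
          next
            case False
            then show ?thesis using b0[OF j] by simp
          qed
        qed
        also have "\<dots> = sg n ?a l0 * c0 * \<phi> \<beta> \<alpha>" using l0 by (simp add: sum.delta)
        finally have "sg n ?a l0 * c0 * \<phi> \<beta> \<alpha> = 0" by simp
        moreover have "sg n ?a l0 \<noteq> (0::'k)" by (rule sg_nz)
        ultimately show False using nz c0nz unfolding c0_def by simp
      qed
    qed
  qed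
  have part1: "\<forall>m. \<forall>F\<in>Kgam n \<gamma> (Suc m). hdiff q n ?ch F = (\<lambda>_ _. 0) \<longrightarrow>
             (\<exists>\<psi>\<in>Kgam n \<gamma> m. hdiff q n ?ch \<psi> = F)"
  proof (intro allI ballI impI)
    fix m and F :: "(nat \<Rightarrow> nat) \<Rightarrow> (nat \<Rightarrow> nat) \<Rightarrow> 'k"
    assume FK: "F \<in> Kgam n \<gamma> (Suc m)" and hz: "hdiff q n ?ch F = (\<lambda>_ _. 0)"
    define \<psi> where "\<psi> = (\<lambda>\<beta> \<alpha>. if \<alpha> l0 = 0 then F (\<beta>(l0 := Suc (\<beta> l0))) (\<alpha>(l0 := 1)) / (sg n (\<alpha>(l0 := 1)) l0 * c0) else 0)"
    have \<psi>K: "\<psi> \<in> Kgam n \<gamma> m"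
    proof -
      have main: "\<beta> \<in> multideg n m \<and> \<alpha> \<in> bitvecs n \<and> (\<forall>l\<in>{1..n}. int (\<beta> l) - int (\<alpha> l) = \<gamma> l)"
        if nz: "\<psi> \<beta> \<alpha> \<noteq> 0" for \<beta> \<alpha>
      proof -
        have a0: "\<alpha> l0 = 0" using nz unfolding \<psi>_def by (auto split: if_splits)
        let ?b = "\<beta>(l0 := Suc (\<beta> l0))" and ?a = "\<alpha>(l0 := 1)"
        have Fnz: "F ?b ?a \<noteq> 0" using nz a0 unfolding \<psi>_def by auto
        have md: "?b \<in> multideg n (Suc m)" using KgamD(1)[OF FK, of ?b ?a] Fnz by blast
        have bv: "?a \<in> bitvecs n" using KgamD(2)[OF FK, of ?b ?a] Fnz by blast
        have H: "\<forall>l\<in>{1..n}. int (?b l) - int (?a l) = \<gamma> l" using KgamD(3)[OF FK, of ?b ?a] Fnz by blast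
        have "\<beta> \<in> multideg n m"
        proof -
          have "\<beta> i = 0" if "i \<notin> {1..n}" for i
          proof -
            have "i \<noteq> l0" using that l0 by auto
            moreover have "(\<beta>(l0 := Suc (\<beta> l0))) i = 0" using md that unfolding multideg_def by blast
            ultimately show ?thesis by simp
          qed
          moreover have "(\<Sum>i\<in>{1..n}. \<beta> i) = m"
            using md sum_upd_Suc[OF l0, of \<beta>] unfolding multideg_def by simp
          ultimately show ?thesis unfolding multideg_def by blast
        qed
        moreover have "\<alpha> \<in> bitvecs n"
        proof -
          have "\<alpha> i \<le> 1" for i
          proof (cases "i = l0")
            case True then show ?thesis using a0 by simp
          next
            case False
            have "(\<alpha>(l0 := 1)) i \<le> 1" using bv unfolding bitvecs_def by blast
            then show ?thesis using False by simp
          qed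
          moreover have "\<alpha> i = 0" if "i \<notin> {1..n}" for i
          proof -
            have "i \<noteq> l0" using that l0 by auto
            moreover have "(\<alpha>(l0 := 1)) i = 0" using bv that unfolding bitvecs_def by blast
            ultimately show ?thesis by simp
          qed
          ultimately show ?thesis unfolding bitvecs_def by blast
        qed
        moreover have "\<forall>l\<in>{1..n}. int (\<beta> l) - int (\<alpha> l) = \<gamma> l"
        proof
          fix l assume l: "l \<in> {1..n}"
          have h: "int (?b l) - int (?a l) = \<gamma> l" using H l by blast
          show "int (\<beta> l) - int (\<alpha> l) = \<gamma> l"
          proof (cases "l = l0")
            case True then show ?thesis using h a0 by simp
          next
            case False then show ?thesis using h by simp
          qed
        qed
        ultimately show ?thesis by blast
      qed
      show ?thesis unfolding Kgam_def HomC_def using main by blast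
    qed
    have "hdiff q n ?ch \<psi> = F"
    proof (intro ext)
      fix \<beta> \<alpha>
      let ?T = "\<lambda>j. if \<beta> j = 0 \<or> \<alpha> j \<noteq> 1 then 0
            else sg n \<alpha> j * cc q n ?ch \<gamma> j * \<psi> (\<beta>(j:=\<beta> j - 1)) (\<alpha>(j:=0))"
      have hp: "hdiff q n ?ch \<psi> \<beta> \<alpha> = (\<Sum>j\<in>{1..n}. ?T j)" by (rule HDI[OF \<psi>K])
      have sgnz: "sg n x j \<noteq> (0::'k)" for x j by (rule sg_nz)
      have c0nz': "c0 \<noteq> 0" using c0nz unfolding c0_def .
      show "hdiff q n ?ch \<psi> \<beta> \<alpha> = F \<beta> \<alpha>"
      proof (cases "\<alpha> l0 = 1")
        case a1: True
        have "(\<Sum>j\<in>{1..n}. ?T j) = (\<Sum>j\<in>{1..n}. if j = l0 then F \<beta> \<alpha> else 0)"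
        proof (rule sum.cong[OF refl])
          fix j assume j: "j \<in> {1..n}"
          show "?T j = (if j = l0 then F \<beta> \<alpha> else 0)"
          proof (cases "j = l0")
            case jl: True
            show ?thesis
            proof (cases "\<beta> l0 = 0")
              case True
              have "F \<beta> \<alpha> = 0"
              proof (rule ccontr)
                assume "F \<beta> \<alpha> \<noteq> 0"
                then have "int (\<beta> l0) - int (\<alpha> l0) = \<gamma> l0" using KgamD(3)[OF FK, of \<beta> \<alpha>] l0 by blast
                then show False using True a1 gl0 by simp
              qed
              then show ?thesis using jl True by simp
            next
              case False
              have e1: "(\<beta>(l0 := \<beta> l0 - 1))(l0 := Suc ((\<beta>(l0 := \<beta> l0 - 1)) l0)) = \<beta>"
                using False by (auto simp: fun_eq_iff)
              have e2: "(\<alpha>(l0 := 0))(l0 := 1) = \<alpha>" using a1 by (auto simp: fun_eq_iff)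
              have "\<psi> (\<beta>(l0 := \<beta> l0 - 1)) (\<alpha>(l0 := 0)) = F \<beta> \<alpha> / (sg n \<alpha> l0 * c0)"
                unfolding \<psi>_def e1 e2 by simp
              then show ?thesis using jl False a1 sgnz[of \<alpha> l0] c0nz'
                by (simp add: field_simps c0_def[symmetric])
            qed
          next
            case False
            have "\<psi> (\<beta>(j:=\<beta> j - 1)) (\<alpha>(j:=0)) = 0" unfolding \<psi>_def using False a1 by simp
            then show ?thesis using False by simp
          qed
        qed
        also have "\<dots> = F \<beta> \<alpha>" using l0 by (simp add: sum.delta)
        finally show ?thesis using hp by simp
      next
        case an1: False
        show ?thesis
        proof (cases "\<alpha> l0 = 0")
          case False
          have "?T j = 0" if "j \<in> {1..n}" for j
          proof (cases "\<alpha> j = 1")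
            case True
            then have "j \<noteq> l0" using an1 by auto
            then have "\<psi> (\<beta>(j:=\<beta> j - 1)) (\<alpha>(j:=0)) = 0" unfolding \<psi>_def using False by simp
            then show ?thesis by simp
          qed simp
          then have "hdiff q n ?ch \<psi> \<beta> \<alpha> = 0" using hp by simp
          moreover have "F \<beta> \<alpha> = 0"
          proof (rule ccontr)
            assume "F \<beta> \<alpha> \<noteq> 0"
            then have "\<alpha> \<in> bitvecs n" using KgamD(2)[OF FK, of \<beta> \<alpha>] by blast
            then have "\<alpha> l0 \<le> 1" unfolding bitvecs_def by blast
            then show False using False an1 by simp
          qed
          ultimately show ?thesis by simp
        next
          case a0: True
          let ?b = "\<beta>(l0 := Suc (\<beta> l0))" and ?a = "\<alpha>(l0 := 1)"
          let ?TF = "\<lambda>j. if ?b j = 0 \<or> ?a j \<noteq> 1 then 0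
            else sg n ?a j * cc q n ?ch \<gamma> j * F (?b(j:=?b j - 1)) (?a(j:=0))"
          have hf: "0 = (\<Sum>j\<in>{1..n}. ?TF j)"
            using HDI[OF FK, of ?b ?a] hz by simp
          define D where "D = sg n ?a l0 * c0"
          have Dnz: "D \<noteq> 0" unfolding D_def using sgnz c0nz' by simp
          have TFl0: "?TF l0 = D * F \<beta> \<alpha>"
          proof -
            have e1: "?b(l0 := ?b l0 - 1) = \<beta>" by (auto simp: fun_eq_iff)
            have e2: "?a(l0 := 0) = \<alpha>" using a0 by (auto simp: fun_eq_iff)
            show ?thesis unfolding e1 e2 D_def c0_def by simp
          qed
          have Tl0: "?T l0 = 0" using a0 by simp
          have claim: "?T j = - ?TF j / D" if j: "j \<in> {1..n}" "j \<noteq> l0" for j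
          proof (cases "\<beta> j = 0 \<or> \<alpha> j \<noteq> 1")
            case True then show ?thesis using j by simp
          next
            case False
            then have bj: "\<beta> j \<noteq> 0" and aj: "\<alpha> j = 1" by auto
            have eb: "(\<beta>(j:=\<beta> j - 1))(l0 := Suc ((\<beta>(j:=\<beta> j - 1)) l0)) = ?b(j:=?b j - 1)"
              using j by (auto simp: fun_eq_iff)
            have ea: "(\<alpha>(j:=0))(l0 := 1) = ?a(j:=0)" using j by (auto simp: fun_eq_iff)
            define X where "X = F (?b(j:=?b j - 1)) (?a(j:=0))"
            have psi: "\<psi> (\<beta>(j:=\<beta> j - 1)) (\<alpha>(j:=0)) = X / (sg n (?a(j:=0)) l0 * c0)"
              unfolding \<psi>_def eb ea X_def using j a0 by simp
            define z where "z = \<alpha>(j:=0)"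
            have ai: "\<alpha>(j:=1) = \<alpha>" using aj by (rule fun_upd_idem)
            have S1: "sg n \<alpha> j = (sg n z j :: 'k)"
              using sg_upd[of n \<alpha> j 1 j] unfolding ai z_def by simp
            have x1: "(?a(j:=0))(l0:=1) = ?a(j:=0)" using j by (auto simp: fun_eq_iff)
            have x2: "(?a(j:=0))(l0:=0) = z" using j a0 unfolding z_def by (auto simp: fun_eq_iff)
            have S2: "sg n (?a(j:=0)) l0 = (sg n z l0 :: 'k)"
              using sg_upd[of n "?a(j:=0)" l0 1 l0] unfolding x1 x2 by simp
            have x3: "\<alpha>(l0:=0) = \<alpha>" using a0 by (rule fun_upd_idem)
            have S3: "sg n ?a j = (sg n z j :: 'k) * (if l0 < j then -1 else 1)"
            proof -
              have "sg n ?a j = (sg n \<alpha> j :: 'k) * (if l0 \<in> {1..n} \<and> l0 < j then (-1)^1 else 1)"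
                using sg_upd[of n \<alpha> l0 1 j] unfolding x3 .
              then show ?thesis using l0 S1 by (cases "l0 < j") simp_all
            qed
            have S4: "sg n ?a l0 = (sg n z l0 :: 'k) * (if j < l0 then -1 else 1)"
            proof -
              have x4: "?a(j:=1) = ?a" using aj j by (auto simp: fun_eq_iff)
              have "sg n ?a l0 = (sg n ((?a)(j:=1)) l0 :: 'k)" unfolding x4 ..
              also have "\<dots> = sg n (?a(j:=0)) l0 * (if j \<in> {1..n} \<and> j < l0 then (-1)^1 else 1)"
                by (rule sg_upd)
              finally show ?thesis using S2 j by simp
            qed
            have TFj: "?TF j = sg n ?a j * cc q n ?ch \<gamma> j * X"
              using bj aj j unfolding X_def by simp
            have Tj: "?T j = sg n \<alpha> j * cc q n ?ch \<gamma> j * (X / (sg n (?a(j:=0)) l0 * c0))"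
              using False psi by simp
            have zj: "sg n z j \<noteq> (0::'k)" "sg n z l0 \<noteq> (0::'k)" by (rule sgnz)+
            show ?thesis
            proof (cases "j < l0")
              case True
              then have "\<not> l0 < j" by simp
              then show ?thesis unfolding Tj TFj unfolding D_def S1 S2 S3 S4 using True zj c0nz'
                by (simp add: field_simps)
            next
              case False
              then have "l0 < j" using j(2) by simp
              then show ?thesis unfolding Tj TFj unfolding D_def S1 S2 S3 S4 using False zj c0nz'
                by (simp add: field_simps)
            qed
          qed
          have "(\<Sum>j\<in>{1..n}. ?T j) = ?T l0 + (\<Sum>j\<in>{1..n}-{l0}. ?T j)"
            by (rule sum.remove[OF fin1 l0])
          also have "(\<Sum>j\<in>{1..n}-{l0}. ?T j) = (\<Sum>j\<in>{1..n}-{l0}. - ?TF j / D)"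
            by (rule sum.cong) (use claim in auto)
          also have "\<dots> = - (\<Sum>j\<in>{1..n}-{l0}. ?TF j) / D"
            by (simp add: sum_negf sum_divide_distrib)
          finally have s1: "(\<Sum>j\<in>{1..n}. ?T j) = - (\<Sum>j\<in>{1..n}-{l0}. ?TF j) / D" using Tl0 by simp
          have r: "(\<Sum>j\<in>{1..n}. ?TF j) = ?TF l0 + (\<Sum>j\<in>{1..n}-{l0}. ?TF j)"
            by (rule sum.remove[OF fin1 l0])
          define R where "R = (\<Sum>j\<in>{1..n}-{l0}. ?TF j)"
          have "0 = D * F \<beta> \<alpha> + R" using hf unfolding r unfolding TFl0 R_def .
          then have R: "R = - (D * F \<beta> \<alpha>)" by (simp add: eq_neg_iff_add_eq_0 add.commute)
          have "hdiff q n ?ch \<psi> \<beta> \<alpha> = - R / D" using hp s1 unfolding R_def by simp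
          then show ?thesis unfolding R using Dnz by simp
        qed
      qed
    qed
    then show "\<exists>\<psi>\<in>Kgam n \<gamma> m. hdiff q n ?ch \<psi> = F" using \<psi>K by blast
  qed
  show ?thesis using part0 part1 by blast
qed


end
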